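(* Let $n\ge1$, and for $j=1,\dots,n$ let $\hat\phi_j\in\mathbb{R}$, $\tilde\phi_j\ge 0$ and $0\le\underline{\xi}_j\le\overline{\xi}_j$. For $\mathbf{x}\in\mathbb{R}^n$, $\mathbf{x}\succeq\mathbf{0}$, define the worst-case squared position error bound $$\mathcal{P}_{\mathrm R}(\mathbf{x})=\max_{\substack{\phi_j\in[\hat\phi_j-\tilde\phi_j,\,\hat\phi_j+\tilde\phi_j]\\ \xi_j\in[\underline\xi_j,\,\overline\xi_j]}}\operatorname{tr}\Big\{\Big(\sum_{j=1}^n x_j\xi_j\mathbf{u}(\phi_j)\mathbf{u}(\phi_j)^{\mathsf T}\Big)^{-1}\Big\}$$ (the trace being $+\infty$ when the matrix is singular), let $\underline{\mathbf{R}}=\operatorname{diag}\{\underline\xi_1,\dots,\underline\xi_n\}$ and $B(\mathbf{x})=\tfrac14\,\mathcal{P}_{\mathrm R}(\mathbf{x})\cdot\mathbf{1}^{\mathsf T}\underline{\mathbf{R}}\mathbf{x}$. For a positive integer $M$, let $\vartheta_m=(2m+1)\pi/M$ for $m\in\mathcal{M}=\{0,1,\dots,M-1\}$, and let $\mathbf{h}_m,\mathbf{g}_m\in\mathbb{R}^n$ have $j$th entries $$[\mathbf{h}_m]_j=\max_{|\epsilon|\le2\tilde\phi_j}\cos(2\hat\phi_j-\vartheta_m+\epsilon),\qquad [\mathbf{g}_m]_j=\frac{[\mathbf{h}_m]_j}{\cos(\pi/M)}.$$ Define $$\underline{\mathcal{P}}_M(\mathbf{x})=\max_{m\in\mathcal{M}}\frac{4\cdot\mathbf{1}^{\mathsf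 T}\underline{\mathbf{R}}\mathbf{x}}{(\mathbf{1}^{\mathsf T}\underline{\mathbf{R}}\mathbf{x})^2-(\mathbf{h}_m^{\mathsf T}\underline{\mathbf{R}}\mathbf{x})^2},\qquad \overline{\mathcal{P}}_M(\mathbf{x})=\max_{m\in\mathcal{M}}\frac{4\cdot\mathbf{1}^{\mathsf T}\underline{\mathbf{R}}\mathbf{x}}{(\mathbf{1}^{\mathsf T}\underline{\mathbf{R}}\mathbf{x})^2-(\mathbf{g}_m^{\mathsf T}\underline{\mathbf{R}}\mathbf{x})^2}.$$ Then for any $\mathbf{x}\succeq\mathbf{0}$ with $\mathcal{P}_{\mathrm R}(\mathbf{x})<\infty$ and any $M\ge\pi\sqrt{B(\mathbf{x})}$, we have $\underline{\mathcal{P}}_M(\mathbf{x})\le\mathcal{P}_{\mathrm R}(\mathbf{x})\le\overline{\mathcal{P}}_M(\mathbf{x})$.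
   Context: $\mathbf{u}(\phi)=[\cos\phi\ \ \sin\phi]^{\mathsf T}$; $\mathbf{1}$ is the all-ones vector; $\mathbf{x}\succeq\mathbf{0}$ means entrywise nonnegative. This models one agent (with one uncertainty cell) in a wireless localization network with $n$ anchors: $\phi_j$ is the agent–anchor angle known to lie in $[\hat\phi_j-\tilde\phi_j,\hat\phi_j+\tilde\phi_j]$, $\xi_j$ the equivalent ranging coefficient known to lie in $[\underline\xi_j,\overline\xi_j]$, and $\mathbf{x}$ the anchor transmit power vector. *)

theory Defs
  imports "HOL-Analysis.Analysis"
begin

definition uvec :: "real \<Rightarrow> real^2" where
  "uvec \<phi> = (\<chi> i. if i = 1 then cos \<phi> else sin \<phi>)"

definition uuT :: "real \<Rightarrow> real^2^2" where
  "uuT \<phi> = (\<chi> i k. uvec \<phi> $ i * uvec \<phi> $ k)"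

definition EFIM :: "nat \<Rightarrow> (nat \<Rightarrow> real) \<Rightarrow> (nat \<Rightarrow> real) \<Rightarrow> (nat \<Rightarrow> real) \<Rightarrow> real^2^2" where
  "EFIM n x \<xi> \<phi> = (\<Sum>j<n. (x j * \<xi> j) *\<^sub>R uuT (\<phi> j))"

definition trinv :: "real^2^2 \<Rightarrow> ereal" where
  "trinv J = (if invertible J then ereal (trace (matrix_inv J)) else \<infinity>)"

definition PR :: "nat \<Rightarrow> (nat \<Rightarrow> real) \<Rightarrow> (nat \<Rightarrow> real) \<Rightarrow> (nat \<Rightarrow> real) \<Rightarrow> (nat \<Rightarrow> real)
    \<Rightarrow> (nat \<Rightarrow> real) \<Rightarrow> ereal" where
  "PR n \<phi>hat \<phi>tl \<xi>lo \<xi>hi x =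
     (SUP (\<phi>, \<xi>) \<in> {(\<phi>, \<xi>). \<forall>j<n. \<phi> j \<in> {\<phi>hat j - \<phi>tl j .. \<phi>hat j + \<phi>tl j}
                              \<and> \<xi> j \<in> {\<xi>lo j .. \<xi>hi j}}.
        trinv (EFIM n x \<xi> \<phi>))"

text \<open>1^T R x with R = diag(xi_lower), and v^T R x.\<close>
definition wsum :: "nat \<Rightarrow> (nat \<Rightarrow> real) \<Rightarrow> (nat \<Rightarrow> real) \<Rightarrow> (nat \<Rightarrow> real) \<Rightarrow> real" where
  "wsum n v \<xi>lo x = (\<Sum>j<n. v j * \<xi>lo j * x j)"

definition Bfun :: "nat \<Rightarrow> (nat \<Rightarrow> real) \<Rightarrow> (nat \<Rightarrow> real) \<Rightarrow> (nat \<Rightarrow> real) \<Rightarrow> (nat \<Rightarrow> real)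
    \<Rightarrow> (nat \<Rightarrow> real) \<Rightarrow> real" where
  "Bfun n \<phi>hat \<phi>tl \<xi>lo \<xi>hi x =
     1/4 * real_of_ereal (PR n \<phi>hat \<phi>tl \<xi>lo \<xi>hi x) * wsum n (\<lambda>_. 1) \<xi>lo x"

definition vartheta :: "nat \<Rightarrow> nat \<Rightarrow> real" where
  "vartheta M m = (2 * real m + 1) * pi / real M"

definition hvec :: "(nat \<Rightarrow> real) \<Rightarrow> (nat \<Rightarrow> real) \<Rightarrow> nat \<Rightarrow> nat \<Rightarrow> nat \<Rightarrow> real" where
  "hvec \<phi>hat \<phi>tl M m j =
     Sup ((\<lambda>\<epsilon>. cos (2 * \<phi>hat j - vartheta M m + \<epsilon>)) ` {-2 * \<phi>tl j .. 2 * \<phi>tl j})"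

definition gvec :: "(nat \<Rightarrow> real) \<Rightarrow> (nat \<Rightarrow> real) \<Rightarrow> nat \<Rightarrow> nat \<Rightarrow> nat \<Rightarrow> real" where
  "gvec \<phi>hat \<phi>tl M m j = hvec \<phi>hat \<phi>tl M m j / cos (pi / real M)"

definition PlowM :: "nat \<Rightarrow> (nat \<Rightarrow> real) \<Rightarrow> (nat \<Rightarrow> real) \<Rightarrow> (nat \<Rightarrow> real) \<Rightarrow> nat
    \<Rightarrow> (nat \<Rightarrow> real) \<Rightarrow> real" where
  "PlowM n \<phi>hat \<phi>tl \<xi>lo M x =
     (MAX m \<in> {..<M}. 4 * wsum n (\<lambda>_. 1) \<xi>lo x /
        ((wsum n (\<lambda>_. 1) \<xi>lo x)\<^sup>2 - (wsum n (hvec \<phi>hat \<phi>tl M m) \<xi>lo x)\<^sup>2))"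

definition PupM :: "nat \<Rightarrow> (nat \<Rightarrow> real) \<Rightarrow> (nat \<Rightarrow> real) \<Rightarrow> (nat \<Rightarrow> real) \<Rightarrow> nat
    \<Rightarrow> (nat \<Rightarrow> real) \<Rightarrow> real" where
  "PupM n \<phi>hat \<phi>tl \<xi>lo M x =
     (MAX m \<in> {..<M}. 4 * wsum n (\<lambda>_. 1) \<xi>lo x /
        ((wsum n (\<lambda>_. 1) \<xi>lo x)\<^sup>2 - (wsum n (gvec \<phi>hat \<phi>tl M m) \<xi>lo x)\<^sup>2))"

end

theory Submission imports Defs begin

lemma inv2_aux:
  fixes A :: "real^2^2" and dd :: real
  assumes dd: "dd = A$1$1 * A$2$2 - A$1$2 * A$2$1" and ddnz: "dd \<noteq> 0"
  defines "C \<equiv> (\<chi> i k. (if i=1 \<and> k=1 then A$2$2 else if i=2 \<and> k=2 then A$1$1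
      else if i = 1 then - A$1$2 else - A$2$1) / dd) :: real^2^2"
  shows "A ** C = mat 1 \<and> C ** A = mat 1"
  unfolding C_def
  apply (simp add: vec_eq_iff forall_2 matrix_matrix_mult_def sum_2 mat_def diff_divide_distrib[symmetric])
  apply (simp add: ddnz dd[symmetric] mult.commute[of "A $ 2 $ 2"] mult.commute[of "A $ 2 $ 1"])
  done

lemma inv2_trace:
  fixes A :: "real^2^2"
  assumes "det A \<noteq> 0"
  shows "invertible A \<and> trace (matrix_inv A) = (A$1$1 + A$2$2) / det A"
proof -
  define dd where "dd = det A"
  define C :: "real^2^2" where "C = (\<chi> i k. (if i=1 \<and> k=1 then A$2$2 else if i=2 \<and> k=2 then A$1$1
      else if i = 1 then - A$1$2 else - A$2$1) / dd)"
  have dd: "dd = A$1$1 * A$2$2 - A$1$2 * A$2$1" unfolding dd_def det_2 ..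
  have ddnz: "dd \<noteq> 0" using assms dd_def by simp
  have C1: "A ** C = mat 1" and C2: "C ** A = mat 1"
    using inv2_aux[OF dd ddnz] unfolding C_def by auto
  have inv: "invertible A" using C1 C2 invertible_def by blast
  define B where "B = matrix_inv A"
  have "A ** B = mat 1 \<and> B ** A = mat 1"
    unfolding B_def matrix_inv_def by (rule someI_ex) (use C1 C2 in blast)
  then have "B = C"
  proof -
    assume h: "A ** B = mat 1 \<and> B ** A = mat 1"
    have "B = B ** (A ** C)" using C1 by (simp add: matrix_mul_rid)
    also have "\<dots> = (B ** A) ** C" by (simp add: matrix_mul_assoc)
    also have "\<dots> = C" using h by (simp add: matrix_mul_lid)
    finally show ?thesis .
  qed
  then have mi: "matrix_inv A = C" using B_def by simp
  have "trace C = (A$1$1 + A$2$2) / dd"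
    unfolding C_def trace_def sum_2 by (simp add: add_divide_distrib)
  then show ?thesis using inv mi dd_def by simp
qed

lemma EFIM_comp:
  "EFIM n x \<xi> \<phi> $ i $ k = (\<Sum>j<n. x j * \<xi> j * (uvec (\<phi> j) $ i * uvec (\<phi> j) $ k))"
  unfolding EFIM_def uuT_def by simp

lemma uvec1: "uvec p $ 1 = cos p" and uvec2: "uvec p $ 2 = sin p"
  unfolding uvec_def by auto

lemma Re_ofr_cis: "Re (complex_of_real r * cis t) = r * cos t"
  and Im_ofr_cis: "Im (complex_of_real r * cis t) = r * sin t"
  by simp_all

definition SS :: "nat \<Rightarrow> (nat \<Rightarrow> real) \<Rightarrow> (nat \<Rightarrow> real) \<Rightarrow> real" where
  "SS n x \<xi> = (\<Sum>j<n. x j * \<xi> j)"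

definition ZZ :: "nat \<Rightarrow> (nat \<Rightarrow> real) \<Rightarrow> (nat \<Rightarrow> real) \<Rightarrow> (nat \<Rightarrow> real) \<Rightarrow> complex" where
  "ZZ n x \<xi> \<phi> = (\<Sum>j<n. complex_of_real (x j * \<xi> j) * cis (2 * \<phi> j))"

lemma ReZZ: "Re (ZZ n x \<xi> \<phi>) = (\<Sum>j<n. x j * \<xi> j * cos (2 * \<phi> j))"
  unfolding ZZ_def Re_sum by (rule sum.cong) simp_all

lemma ImZZ: "Im (ZZ n x \<xi> \<phi>) = (\<Sum>j<n. x j * \<xi> j * sin (2 * \<phi> j))"
  unfolding ZZ_def Im_sum by (rule sum.cong) simp_all

lemma trinv_formula:
  "trinv (EFIM n x \<xi> \<phi>) =
    (if (SS n x \<xi>)\<^sup>2 - (cmod (ZZ n x \<xi> \<phi>))\<^sup>2 \<noteq> 0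
     then ereal (4 * SS n x \<xi> / ((SS n x \<xi>)\<^sup>2 - (cmod (ZZ n x \<xi> \<phi>))\<^sup>2)) else \<infinity>)"
proof -
  define A where "A = EFIM n x \<xi> \<phi>"
  define a where "a = (\<Sum>j<n. x j * \<xi> j * (cos (\<phi> j) * cos (\<phi> j)))"
  define d where "d = (\<Sum>j<n. x j * \<xi> j * (sin (\<phi> j) * sin (\<phi> j)))"
  define b where "b = (\<Sum>j<n. x j * \<xi> j * (cos (\<phi> j) * sin (\<phi> j)))"
  have A11: "A$1$1 = a" and A22: "A$2$2 = d" and A12: "A$1$2 = b"
    and A21: "A$2$1 = b"
    unfolding A_def a_def b_def d_def EFIM_comp uvec1 uvec2 by (auto simp: mult.commute)
  have S: "SS n x \<xi> = a + d"
    unfolding SS_def a_def d_def sum.distrib[symmetric]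
    by (rule sum.cong) (simp_all add: distrib_left[symmetric] sin_cos_squared_add3)
  have ReZ: "Re (ZZ n x \<xi> \<phi>) = a - d"
    unfolding ReZZ a_def d_def sum_subtractf[symmetric]
    by (rule sum.cong) (simp_all only: cos_double power2_eq_square right_diff_distrib)
  have ImZ: "Im (ZZ n x \<xi> \<phi>) = 2 * b"
    unfolding ImZZ b_def sum_distrib_left
    by (rule sum.cong) (simp_all only: sin_double, simp add: algebra_simps)
  have cm: "(cmod (ZZ n x \<xi> \<phi>))\<^sup>2 = (a - d)\<^sup>2 + (2*b)\<^sup>2"
    using ReZ ImZ cmod_power2 by metis
  have det: "det A = ((SS n x \<xi>)\<^sup>2 - (cmod (ZZ n x \<xi> \<phi>))\<^sup>2) / 4"
    unfolding det_2 A11 A22 A12 A21 S cm by (simp add: power2_eq_square algebra_simps)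
  show ?thesis
  proof (cases "(SS n x \<xi>)\<^sup>2 - (cmod (ZZ n x \<xi> \<phi>))\<^sup>2 \<noteq> 0")
    case True
    then have "det A \<noteq> 0" using det by simp
    from inv2_trace[OF this] show ?thesis using True
      unfolding trinv_def A_def[symmetric] A11 A22 det S by simp
  next
    case False
    then have "\<not> invertible A" using det invertible_det_nz[of A] by simp
    then show ?thesis using False unfolding trinv_def A_def[symmetric] by simp
  qed
qed


lemma hvec_attain:
  assumes "\<phi>tl j \<ge> 0"
  shows "\<exists>e\<in>{-2 * \<phi>tl j .. 2 * \<phi>tl j}. hvec \<phi>hat \<phi>tl M m j = cos (2 * \<phi>hat j - vartheta M m + e)"
proof -
  let ?f = "\<lambda>e. cos (2 * \<phi>hat j - vartheta M m + e)"
  let ?s = "{-2 * \<phi>tl j .. 2 * \<phi>tl j}"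
  have "\<exists>x\<in>?s. \<forall>y\<in>?s. ?f y \<le> ?f x"
    by (rule continuous_attains_sup) (use assms in \<open>auto intro!: continuous_intros\<close>)
  then obtain e where e: "e \<in> ?s" "\<forall>y\<in>?s. ?f y \<le> ?f e" by blast
  have "Sup (?f ` ?s) = ?f e"
    by (rule cSup_eq_maximum) (use e in auto)
  then show ?thesis using e unfolding hvec_def by blast
qed

lemma hvec_ge:
  assumes "\<phi> j \<in> {\<phi>hat j - \<phi>tl j .. \<phi>hat j + \<phi>tl j}"
  shows "cos (2 * \<phi> j - vartheta M m) \<le> hvec \<phi>hat \<phi>tl M m j"
proof -
  let ?f = "\<lambda>e. cos (2 * \<phi>hat j - vartheta M m + e)"
  let ?s = "{-2 * \<phi>tl j .. 2 * \<phi>tl j}"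
  have mem: "2 * \<phi> j - 2 * \<phi>hat j \<in> ?s" using assms by auto
  have bdd: "bdd_above (?f ` ?s)" by (rule bdd_aboveI[of _ 1]) auto
  have im: "?f (2 * \<phi> j - 2 * \<phi>hat j) \<in> ?f ` ?s" using mem by blast
  have "?f (2 * \<phi> j - 2 * \<phi>hat j) \<le> Sup (?f ` ?s)"
    by (rule cSup_upper[OF im bdd])
  then show ?thesis unfolding hvec_def by (simp add: algebra_simps)
qed

lemma ReZZrot: "Re (ZZ n x \<xi> \<phi> * cis (- \<theta>)) = (\<Sum>j<n. x j * \<xi> j * cos (2 * \<phi> j - \<theta>))"
proof -
  have "ZZ n x \<xi> \<phi> * cis (- \<theta>) = (\<Sum>j<n. complex_of_real (x j * \<xi> j) * cis (2 * \<phi> j - \<theta>))"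
    unfolding ZZ_def sum_distrib_right
    by (rule sum.cong) (simp_all add: mult.assoc cis_mult)
  then show ?thesis unfolding Re_sum by simp
qed

lemma Re_rot_le: "\<bar>Re (z * cis (- \<theta>))\<bar> \<le> cmod z"
  using abs_Re_le_cmod[of "z * cis (- \<theta>)"] by (simp add: norm_mult)

lemma Re_rot_polar: "Re (z * cis (- \<theta>)) = cmod z * cos (Arg z - \<theta>)"
proof -
  have "z * cis (- \<theta>) = complex_of_real (cmod z) * cis (Arg z - \<theta>)"
    by (subst (1) rcis_cmod_Arg[symmetric]) (simp add: rcis_def mult.assoc cis_mult)
  then show ?thesis by simp
qed

lemma cos_lower: "1 - a\<^sup>2 / 2 \<le> cos (a::real)"
proof -
  have "cos a = cos (2 * (a/2))" by simp
  also have "\<dots> = 1 - 2 * sin (a/2) ^ 2" by (rule cos_double_sin)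
  finally have c: "cos a = 1 - 2 * sin (a/2) ^ 2" .
  have "\<bar>sin (a/2)\<bar> \<le> \<bar>a/2\<bar>" by (rule abs_sin_x_le_abs_x)
  then have "\<bar>sin (a/2)\<bar>^2 \<le> \<bar>a/2\<bar>^2" by (rule power_mono) simp
  then have "sin (a/2) ^ 2 \<le> (a/2)^2" by (simp only: power2_abs)
  then show ?thesis using c by (simp add: power_divide)
qed

lemma exists_m:
  assumes "M \<ge> 1"
  shows "\<exists>m<M. cos (pi / real M) \<le> cos (\<theta> - vartheta M m)"
proof -
  have M0: "real M > 0" using assms by simp
  define t where "t = (\<theta> * real M / pi - 1) / 2"
  define q where "q = round t"
  have tq: "\<bar>of_int q - t\<bar> \<le> 1/2" unfolding q_def by (rule of_int_round_abs_le)
  define k where "k = q div int M"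
  define m where "m = nat (q mod int M)"
  have "q mod int M \<ge> 0" "q mod int M < int M" using M0 by auto
  then have mM: "m < M" and mq: "int m = q mod int M" unfolding m_def by auto
  have qeq: "q = int m + int M * k" unfolding mq k_def by simp
  have qeq': "real_of_int q = real m + real M * real_of_int k"
    using arg_cong[OF qeq, of real_of_int] by simp
  have th: "\<theta> = (2 * t + 1) * pi / real M" unfolding t_def using M0 by (simp add: field_simps)
  have "\<theta> - vartheta M m = 2 * (t - of_int q) * pi / real M + 2 * pi * of_int k"
    unfolding vartheta_def th qeq' using M0 by (simp add: field_simps)
  then have eq: "2 * pi * of_int (-k) + (\<theta> - vartheta M m) = 2 * (t - of_int q) * pi / real M"
    by simp
  define u where "u = t - of_int q"
  have "\<bar>2 * u * pi / real M\<bar> = 2 * \<bar>u\<bar> * (pi / real M)"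
    using M0 by (simp add: abs_mult)
  then have "\<bar>2 * (t - of_int q) * pi / real M\<bar> = 2 * \<bar>of_int q - t\<bar> * (pi / real M)"
    unfolding u_def by (simp add: abs_minus_commute)
  also have "\<dots> \<le> 2 * (1/2) * (pi / real M)"
    by (rule mult_right_mono) (use tq M0 in auto)
  finally have b: "\<bar>2 * pi * of_int (-k) + (\<theta> - vartheta M m)\<bar> \<le> pi / real M"
    unfolding eq by simp
  have "pi / real M \<le> pi" using assms by (simp add: divide_le_eq)
  from cos_monotone_aux[OF b this] mM show ?thesis by blast
qed

lemma mono_part:
  fixes S R S' R' :: real
  assumes "0 \<le> R" "0 \<le> R'" "R' < S'" "S' + R' \<le> S + R" "S' - R' \<le> S - R"
  shows "4 * S / (S\<^sup>2 - R\<^sup>2) \<le> 4 * S' / (S'\<^sup>2 - R'\<^sup>2)"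
proof -
  have p1: "S' + R' > 0" "S' - R' > 0" using assms by auto
  have p2: "S + R > 0" "S - R > 0" using assms by auto
  have e1: "4 * S / (S\<^sup>2 - R\<^sup>2) = 2 / (S + R) + 2 / (S - R)"
    using p2 by (simp add: field_simps power2_eq_square)
  have e2: "4 * S' / (S'\<^sup>2 - R'\<^sup>2) = 2 / (S' + R') + 2 / (S' - R')"
    using p1 by (simp add: field_simps power2_eq_square)
  have "2 / (S + R) \<le> 2 / (S' + R')" using p1 assms by (intro divide_left_mono) auto
  moreover have "2 / (S - R) \<le> 2 / (S' - R')" using p1 assms by (intro divide_left_mono) auto
  ultimately show ?thesis unfolding e1 e2 by simp
qed

lemma frac_mono:
  fixes S F R :: real
  assumes "S > 0" "F\<^sup>2 \<le> R\<^sup>2" "R\<^sup>2 < S\<^sup>2"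
  shows "4 * S / (S\<^sup>2 - F\<^sup>2) \<le> 4 * S / (S\<^sup>2 - R\<^sup>2)"
  using assms by (intro divide_left_mono mult_pos_pos) auto

lemma B_part:
  fixes S \<rho> p :: real and M :: nat
  assumes "0 \<le> \<rho>" "\<rho> < S" "4 * S / (S\<^sup>2 - \<rho>\<^sup>2) \<le> p" "M \<ge> 1"
    and "real M \<ge> pi * sqrt (1/4 * p * S)"
  shows "\<rho> < S * cos (pi / real M)"
proof -
  have S0: "S > 0" using assms by simp
  have d0: "S\<^sup>2 - \<rho>\<^sup>2 > 0" using assms by (simp add: power_strict_mono)
  define B where "B = 1/4 * p * S"
  have "S * (4 * S / (S\<^sup>2 - \<rho>\<^sup>2)) \<le> S * p" using assms S0 by (intro mult_left_mono) auto
  then have BB: "B \<ge> S\<^sup>2 / (S\<^sup>2 - \<rho>\<^sup>2)" unfolding B_def using d0 by (simp add: power2_eq_square field_simps)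
  have Bpos: "B > 0" using BB d0 S0 by (smt (verit) divide_pos_pos zero_less_power)
  define a where "a = pi / real M"
  have M0: "real M > 0" using assms by simp
  have "pi * sqrt B \<le> real M" using assms(5) by (simp only: B_def)
  then have "a * sqrt B \<le> 1" unfolding a_def using M0 by (simp add: field_simps)
  moreover have "0 \<le> a * sqrt B" using M0 Bpos unfolding a_def by simp
  ultimately have "(a * sqrt B)\<^sup>2 \<le> 1\<^sup>2" by (intro power_mono)
  then have "(a * sqrt B)\<^sup>2 \<le> 1" by simp
  then have a2: "a\<^sup>2 * B \<le> 1" using Bpos by (simp add: power_mult_distrib)
  have "a\<^sup>2 * (S\<^sup>2 / (S\<^sup>2 - \<rho>\<^sup>2)) \<le> a\<^sup>2 * B" using BB by (intro mult_left_mono) auto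
  with a2 have "a\<^sup>2 * S\<^sup>2 / (S\<^sup>2 - \<rho>\<^sup>2) \<le> 1" by simp
  then have "a\<^sup>2 * S\<^sup>2 \<le> S\<^sup>2 - \<rho>\<^sup>2" using d0 by (simp add: pos_divide_le_eq)
  moreover have "1 - a\<^sup>2 / 2 \<le> cos a" by (rule cos_lower)
  ultimately have "S * (1 - a\<^sup>2 / 2) \<le> S * cos a" using S0 by (intro mult_left_mono) auto
  moreover have "\<rho> < S * (1 - a\<^sup>2 / 2)"
  proof -
    have "2 * S * \<rho> < S\<^sup>2 + \<rho>\<^sup>2" using assms by (smt (verit) power2_diff zero_less_power2)
    also have "\<dots> \<le> 2 * S\<^sup>2 - a\<^sup>2 * S\<^sup>2" using \<open>a\<^sup>2 * S\<^sup>2 \<le> S\<^sup>2 - \<rho>\<^sup>2\<close> by simp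
    finally have "2 * S * \<rho> < S * (2 * S - a\<^sup>2 * S)" by (simp add: power2_eq_square algebra_simps)
    then have "2 * \<rho> < 2 * S - a\<^sup>2 * S" using S0 by (simp add: mult.assoc)
    then show ?thesis by (simp add: algebra_simps)
  qed
  ultimately show ?thesis unfolding a_def by simp
qed


lemma ZZ_le_SS:
  assumes "\<forall>j<n. 0 \<le> x j * \<eta> j"
  shows "cmod (ZZ n x \<eta> \<phi>) \<le> SS n x \<eta>"
proof -
  have "cmod (ZZ n x \<eta> \<phi>) \<le> (\<Sum>j<n. cmod (complex_of_real (x j * \<eta> j) * cis (2 * \<phi> j)))"
    unfolding ZZ_def by (rule norm_sum)
  also have "\<dots> = SS n x \<eta>" unfolding SS_def
    by (rule sum.cong) (use assms in \<open>simp_all add: norm_mult abs_mult[symmetric]\<close>)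
  finally show ?thesis .
qed

lemma ZZ_diff: "ZZ n x \<xi> \<phi> - ZZ n x \<eta> \<phi> = ZZ n x (\<lambda>j. \<xi> j - \<eta> j) \<phi>"
  unfolding ZZ_def sum_subtractf[symmetric]
  by (rule sum.cong) (simp_all add: algebra_simps)

lemma SS_diff: "SS n x \<xi> - SS n x \<eta> = SS n x (\<lambda>j. \<xi> j - \<eta> j)"
  unfolding SS_def sum_subtractf[symmetric]
  by (rule sum.cong) (simp_all add: algebra_simps)

lemma wsum_one: "wsum n (\<lambda>_. 1) \<xi>lo x = SS n x \<xi>lo"
  unfolding wsum_def SS_def by (rule sum.cong) simp_all

lemma wsum_h:
  assumes "\<forall>j<n. h j = cos (2 * \<phi> j - \<theta>)"
  shows "wsum n h \<xi>lo x = Re (ZZ n x \<xi>lo \<phi> * cis (- \<theta>))"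
  unfolding wsum_def ReZZrot by (rule sum.cong) (use assms in simp_all)

lemma wsum_h_ge:
  assumes "\<forall>j<n. \<phi> j \<in> {\<phi>hat j - \<phi>tl j .. \<phi>hat j + \<phi>tl j}" "\<forall>j<n. 0 \<le> x j * \<xi>lo j"
  shows "Re (ZZ n x \<xi>lo \<phi> * cis (- vartheta M m)) \<le> wsum n (hvec \<phi>hat \<phi>tl M m) \<xi>lo x"
  unfolding wsum_def ReZZrot
proof (rule sum_mono)
  fix j assume "j \<in> {..<n}"
  then have "cos (2 * \<phi> j - vartheta M m) \<le> hvec \<phi>hat \<phi>tl M m j"
    "0 \<le> x j * \<xi>lo j" using assms hvec_ge by auto
  then show "x j * \<xi>lo j * cos (2 * \<phi> j - vartheta M m) \<le> hvec \<phi>hat \<phi>tl M m j * \<xi>lo j * x j"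
    using mult_left_mono by (metis mult.commute mult.left_commute)
qed

lemma wsum_g: "wsum n (gvec \<phi>hat \<phi>tl M m) \<xi>lo x = wsum n (hvec \<phi>hat \<phi>tl M m) \<xi>lo x / cos (pi / real M)"
  unfolding wsum_def gvec_def sum_divide_distrib by (rule sum.cong) simp_all

lemma attain_phi:
  assumes "\<forall>j<n. \<phi>tl j \<ge> 0"
  shows "\<exists>\<phi>'. (\<forall>j<n. \<phi>' j \<in> {\<phi>hat j - \<phi>tl j .. \<phi>hat j + \<phi>tl j}) \<and>
     (\<forall>j<n. hvec \<phi>hat \<phi>tl M m j = cos (2 * \<phi>' j - vartheta M m))"
proof -
  have "\<forall>j. \<exists>e. j < n \<longrightarrow> e \<in> {-2 * \<phi>tl j .. 2 * \<phi>tl j} \<and>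
      hvec \<phi>hat \<phi>tl M m j = cos (2 * \<phi>hat j - vartheta M m + e)"
    using hvec_attain assms by blast
  then obtain e where e: "\<forall>j. j < n \<longrightarrow> e j \<in> {-2 * \<phi>tl j .. 2 * \<phi>tl j} \<and>
      hvec \<phi>hat \<phi>tl M m j = cos (2 * \<phi>hat j - vartheta M m + e j)"
    by metis
  show ?thesis
    by (rule exI[of _ "\<lambda>j. \<phi>hat j + e j / 2"]) (use e in \<open>auto simp: algebra_simps\<close>)
qed


theorem proposition4:
  fixes n M :: nat and \<phi>hat \<phi>tl \<xi>lo \<xi>hi x :: "nat \<Rightarrow> real"
  assumes "n \<ge> 1"
    and "\<forall>j<n. \<phi>tl j \<ge> 0"
    and "\<forall>j<n. 0 \<le> \<xi>lo j \<and> \<xi>lo j \<le> \<xi>hi j"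
    and "\<forall>j<n. x j \<ge> 0"
    and "PR n \<phi>hat \<phi>tl \<xi>lo \<xi>hi x < \<infinity>"
    and "M \<ge> 1"
    and "real M \<ge> pi * sqrt (Bfun n \<phi>hat \<phi>tl \<xi>lo \<xi>hi x)"
  shows "ereal (PlowM n \<phi>hat \<phi>tl \<xi>lo M x) \<le> PR n \<phi>hat \<phi>tl \<xi>lo \<xi>hi x
       \<and> PR n \<phi>hat \<phi>tl \<xi>lo \<xi>hi x \<le> ereal (PupM n \<phi>hat \<phi>tl \<xi>lo M x)"
proof -
  define D where "D = {(\<phi>::nat\<Rightarrow>real, \<xi>::nat\<Rightarrow>real). \<forall>j<n. \<phi> j \<in> {\<phi>hat j - \<phi>tl j .. \<phi>hat j + \<phi>tl j}
                              \<and> \<xi> j \<in> {\<xi>lo j .. \<xi>hi j}}"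
  define P where "P = PR n \<phi>hat \<phi>tl \<xi>lo \<xi>hi x"
  have Pdef: "P = (SUP (\<phi>, \<xi>) \<in> D. trinv (EFIM n x \<xi> \<phi>))"
    unfolding P_def PR_def D_def ..
  have upper: "trinv (EFIM n x \<xi> \<phi>) \<le> P" if "(\<phi>, \<xi>) \<in> D" for \<phi> \<xi>
    unfolding Pdef using that by (force intro: SUP_upper2)
  have G: "cmod (ZZ n x \<xi> \<phi>) < SS n x \<xi> \<and>
      trinv (EFIM n x \<xi> \<phi>) = ereal (4 * SS n x \<xi> / ((SS n x \<xi>)\<^sup>2 - (cmod (ZZ n x \<xi> \<phi>))\<^sup>2))"
    if "(\<phi>, \<xi>) \<in> D" for \<phi> \<xi>
  proof -
    have nn: "\<forall>j<n. 0 \<le> x j * \<xi> j"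
    proof (intro allI impI)
      fix j assume j: "j < n"
      have "0 \<le> \<xi>lo j" "\<xi>lo j \<le> \<xi> j" "0 \<le> x j" using that assms(3,4) j unfolding D_def by auto
      then show "0 \<le> x j * \<xi> j" by simp
    qed
    have le: "cmod (ZZ n x \<xi> \<phi>) \<le> SS n x \<xi>" by (rule ZZ_le_SS[OF nn])
    have "trinv (EFIM n x \<xi> \<phi>) \<noteq> \<infinity>"
      using upper[OF that] assms(5) P_def by auto
    then have ne: "(SS n x \<xi>)\<^sup>2 - (cmod (ZZ n x \<xi> \<phi>))\<^sup>2 \<noteq> 0"
      unfolding trinv_formula by (auto split: if_splits)
    then have "cmod (ZZ n x \<xi> \<phi>) \<noteq> SS n x \<xi>" by auto
    then show ?thesis using le ne unfolding trinv_formula by simp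
  qed
  define S' where "S' = SS n x \<xi>lo"
  have nnlo: "\<forall>j<n. 0 \<le> x j * \<xi>lo j" using assms(3,4) by auto
  have inD: "(\<phi>, \<xi>lo) \<in> D" if "\<forall>j<n. \<phi> j \<in> {\<phi>hat j - \<phi>tl j .. \<phi>hat j + \<phi>tl j}" for \<phi>
    using that assms(3) unfolding D_def by auto
  have hatD: "(\<phi>hat, \<xi>lo) \<in> D" by (rule inD) (use assms(2) in auto)
  have "P \<noteq> \<infinity>" using assms(5) P_def by auto
  moreover have "P \<noteq> -\<infinity>" using upper[OF hatD] G[OF hatD] by auto
  ultimately obtain p where p: "P = ereal p" by (cases P) auto
  have Glo: "cmod (ZZ n x \<xi>lo \<phi>) < S' \<and> 4 * S' / (S'\<^sup>2 - (cmod (ZZ n x \<xi>lo \<phi>))\<^sup>2) \<le> p"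
    if "\<forall>j<n. \<phi> j \<in> {\<phi>hat j - \<phi>tl j .. \<phi>hat j + \<phi>tl j}" for \<phi>
    using G[OF inD[OF that]] upper[OF inD[OF that]] p unfolding S'_def by auto
  have W1: "wsum n (\<lambda>_. 1) \<xi>lo x = S'" unfolding S'_def by (rule wsum_one)
  have Bf: "Bfun n \<phi>hat \<phi>tl \<xi>lo \<xi>hi x = 1/4 * p * S'"
    unfolding Bfun_def P_def[symmetric] p W1 by simp
  have low: "4 * S' / (S'\<^sup>2 - (wsum n (hvec \<phi>hat \<phi>tl M m) \<xi>lo x)\<^sup>2) \<le> p" for m
  proof -
    obtain \<phi>' where \<phi>': "\<forall>j<n. \<phi>' j \<in> {\<phi>hat j - \<phi>tl j .. \<phi>hat j + \<phi>tl j}"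
      "\<forall>j<n. hvec \<phi>hat \<phi>tl M m j = cos (2 * \<phi>' j - vartheta M m)"
      using attain_phi[OF assms(2)] by blast
    define F where "F = wsum n (hvec \<phi>hat \<phi>tl M m) \<xi>lo x"
    define \<rho> where "\<rho> = cmod (ZZ n x \<xi>lo \<phi>')"
    have F: "F = Re (ZZ n x \<xi>lo \<phi>' * cis (- vartheta M m))"
      unfolding F_def by (rule wsum_h[OF \<phi>'(2)])
    have "\<bar>F\<bar> \<le> \<rho>" unfolding F \<rho>_def by (rule Re_rot_le)
    then have F2: "F\<^sup>2 \<le> \<rho>\<^sup>2" by (metis abs_le_square_iff abs_of_nonneg norm_ge_zero \<rho>_def)
    have r: "\<rho> < S'" "4 * S' / (S'\<^sup>2 - \<rho>\<^sup>2) \<le> p" using Glo[OF \<phi>'(1)] \<rho>_def by auto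
    have r0: "0 \<le> \<rho>" unfolding \<rho>_def by simp
    have "\<rho>\<^sup>2 < S'\<^sup>2" using r r0 by (intro power_strict_mono) auto
    then have "4 * S' / (S'\<^sup>2 - F\<^sup>2) \<le> 4 * S' / (S'\<^sup>2 - \<rho>\<^sup>2)"
      using r r0 F2 by (intro frac_mono) auto
    then show ?thesis using r F_def by simp
  qed
  have part1: "ereal (PlowM n \<phi>hat \<phi>tl \<xi>lo M x) \<le> P"
  proof -
    let ?f = "\<lambda>m. 4 * wsum n (\<lambda>_. 1) \<xi>lo x /
        ((wsum n (\<lambda>_. 1) \<xi>lo x)\<^sup>2 - (wsum n (hvec \<phi>hat \<phi>tl M m) \<xi>lo x)\<^sup>2)"
    have "0 \<in> {..<M}" using assms(6) by simp
    then have ne: "?f ` {..<M} \<noteq> {}" by blast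
    have "Max (?f ` {..<M}) \<in> ?f ` {..<M}" by (rule Max_in) (use ne in auto)
    then obtain m where "PlowM n \<phi>hat \<phi>tl \<xi>lo M x = ?f m" unfolding PlowM_def by auto
    then show ?thesis using low[of m] W1 p by simp
  qed
  have part2: "trinv (EFIM n x \<xi> \<phi>) \<le> ereal (PupM n \<phi>hat \<phi>tl \<xi>lo M x)" if D: "(\<phi>, \<xi>) \<in> D" for \<phi> \<xi>
  proof -
    have \<phi>box: "\<forall>j<n. \<phi> j \<in> {\<phi>hat j - \<phi>tl j .. \<phi>hat j + \<phi>tl j}" using D unfolding D_def by auto
    define S where "S = SS n x \<xi>"
    define R where "R = cmod (ZZ n x \<xi> \<phi>)"
    define Z' where "Z' = ZZ n x \<xi>lo \<phi>"
    define R' where "R' = cmod Z'"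
    have GD: "R < S" "trinv (EFIM n x \<xi> \<phi>) = ereal (4 * S / (S\<^sup>2 - R\<^sup>2))"
      using G[OF D] S_def R_def by auto
    have GL: "R' < S'" "4 * S' / (S'\<^sup>2 - R'\<^sup>2) \<le> p" using Glo[OF \<phi>box] R'_def Z'_def by auto
    have dnn: "\<forall>j<n. 0 \<le> x j * (\<xi> j - \<xi>lo j)" using D assms(4) unfolding D_def by auto
    have tri: "cmod (ZZ n x \<xi> \<phi> - Z') \<le> S - S'"
      unfolding Z'_def ZZ_diff S_def S'_def SS_diff by (rule ZZ_le_SS[OF dnn])
    have t1: "R \<le> R' + cmod (ZZ n x \<xi> \<phi> - Z')" unfolding R_def R'_def
      by (metis add.commute norm_triangle_sub)
    have t2: "R' \<le> R + cmod (ZZ n x \<xi> \<phi> - Z')" unfolding R_def R'_def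
      by (metis add.commute norm_minus_commute norm_triangle_sub)
    have step1: "4 * S / (S\<^sup>2 - R\<^sup>2) \<le> 4 * S' / (S'\<^sup>2 - R'\<^sup>2)"
      by (rule mono_part) (use GL t1 t2 tri in \<open>auto simp: R_def R'_def\<close>)
    obtain m where m: "m < M" "cos (pi / real M) \<le> cos (Arg Z' - vartheta M m)"
      using exists_m[OF assms(6)] by blast
    obtain \<phi>' where \<phi>': "\<forall>j<n. \<phi>' j \<in> {\<phi>hat j - \<phi>tl j .. \<phi>hat j + \<phi>tl j}"
      "\<forall>j<n. hvec \<phi>hat \<phi>tl M m j = cos (2 * \<phi>' j - vartheta M m)"
      using attain_phi[OF assms(2)] by blast
    define F where "F = wsum n (hvec \<phi>hat \<phi>tl M m) \<xi>lo x"
    define \<rho> where "\<rho> = cmod (ZZ n x \<xi>lo \<phi>')"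
    define c where "c = cos (pi / real M)"
    have F: "F = Re (ZZ n x \<xi>lo \<phi>' * cis (- vartheta M m))"
      unfolding F_def by (rule wsum_h[OF \<phi>'(2)])
    have "\<bar>F\<bar> \<le> \<rho>" unfolding F \<rho>_def by (rule Re_rot_le)
    then have Fr: "F \<le> \<rho>" by simp
    have r: "\<rho> < S'" "4 * S' / (S'\<^sup>2 - \<rho>\<^sup>2) \<le> p" using Glo[OF \<phi>'(1)] \<rho>_def by auto
    have r0: "0 \<le> \<rho>" unfolding \<rho>_def by simp
    have Bc: "\<rho> < S' * c" unfolding c_def
      by (rule B_part[OF r0 r(1) r(2) assms(6)]) (use assms(7) Bf in simp)
    have R'0: "0 \<le> R'" unfolding R'_def by simp
    have S'0: "S' > 0" using r r0 by simp
    have c0: "c > 0" using Bc r0 S'0 by (smt (verit) mult_nonpos_nonneg mult_le_0_iff)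
    have "R' * c \<le> R' * cos (Arg Z' - vartheta M m)" using m(2) R'0 c_def by (intro mult_left_mono) auto
    also have "\<dots> = Re (Z' * cis (- vartheta M m))" unfolding R'_def by (rule Re_rot_polar[symmetric])
    also have "\<dots> \<le> F" unfolding F_def Z'_def by (rule wsum_h_ge[OF \<phi>box nnlo])
    finally have RF: "R' * c \<le> F" .
    define Gm where "Gm = F / c"
    have G1: "R' \<le> Gm" unfolding Gm_def using RF c0 by (simp add: pos_le_divide_eq)
    have G2: "Gm < S'" unfolding Gm_def using Fr Bc c0 by (simp add: pos_divide_less_eq)
    have "R'\<^sup>2 \<le> Gm\<^sup>2" using G1 R'0 by (intro power_mono) auto
    moreover have "Gm\<^sup>2 < S'\<^sup>2" using G1 G2 R'0 by (intro power_strict_mono) auto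
    ultimately have step2: "4 * S' / (S'\<^sup>2 - R'\<^sup>2) \<le> 4 * S' / (S'\<^sup>2 - Gm\<^sup>2)"
      using S'0 by (intro frac_mono) auto
    let ?f = "\<lambda>m. 4 * wsum n (\<lambda>_. 1) \<xi>lo x /
        ((wsum n (\<lambda>_. 1) \<xi>lo x)\<^sup>2 - (wsum n (gvec \<phi>hat \<phi>tl M m) \<xi>lo x)\<^sup>2)"
    have "?f m \<le> Max (?f ` {..<M})" using m(1) by (intro Max_ge) auto
    moreover have "?f m = 4 * S' / (S'\<^sup>2 - Gm\<^sup>2)"
      unfolding W1 wsum_g Gm_def F_def c_def ..
    ultimately have "4 * S' / (S'\<^sup>2 - Gm\<^sup>2) \<le> PupM n \<phi>hat \<phi>tl \<xi>lo M x"
      unfolding PupM_def by simp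
    then show ?thesis using GD step1 step2 by simp
  qed
  have "P \<le> ereal (PupM n \<phi>hat \<phi>tl \<xi>lo M x)"
    unfolding Pdef by (rule SUP_least) (use part2 in auto)
  then show ?thesis using part1 P_def by simp
qed

end
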